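(* Let $V$ be a vector space of dimension $n\ge3$ over $\mathbb{F}_q$, let $w$ be a $1$-subspace (point) and $H$ a hyperplane of $V$ with $w\le H$. Let $\Delta^{(1)}$ be the set of $1$-subspaces of $V$ not contained in $H$ and $\Delta^{(2)}$ the set of hyperplanes of $V$ not containing $w$. Let $\Gamma$ be the bipartite graph with vertex set $\Delta^{(1)}\cup\Delta^{(2)}$ in which a point $p\in\Delta^{(1)}$ is adjacent to a hyperplane $K\in\Delta^{(2)}$ iff $p\le K$. Then $\Gamma$ is geodesic-transitive.
   Context: A geodesic of length $\ell$ is a vertex sequence $(v_0,\dots,v_\ell)$ with consecutive vertices adjacent and $d(v_0,v_\ell)=\ell$; a graph is geodesic-transitive if its automorphism group is transitive on geodesics of each length. (This graph is a distance-transitive antipodal $q$-cover of $K_{q^{n-2},q^{n-2}}$ of diameter $4$.) *)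

theory Defs
  imports "HOL-Analysis.Analysis"
begin

definition is_walk :: "'v set \<Rightarrow> ('v \<Rightarrow> 'v \<Rightarrow> bool) \<Rightarrow> 'v list \<Rightarrow> bool" where
  "is_walk VV E vs \<longleftrightarrow> vs \<noteq> [] \<and> set vs \<subseteq> VV \<and>
     (\<forall>i. Suc i < length vs \<longrightarrow> E (vs ! i) (vs ! Suc i))"

definition gdist :: "'v set \<Rightarrow> ('v \<Rightarrow> 'v \<Rightarrow> bool) \<Rightarrow> 'v \<Rightarrow> 'v \<Rightarrow> nat" where
  "gdist VV E u v = (LEAST l. \<exists>vs. is_walk VV E vs \<and> hd vs = u \<and> last vs = v \<and> length vs = Suc l)"

definition is_geodesic :: "'v set \<Rightarrow> ('v \<Rightarrow> 'v \<Rightarrow> bool) \<Rightarrow> 'v list \<Rightarrow> bool" where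
  "is_geodesic VV E vs \<longleftrightarrow> is_walk VV E vs \<and> gdist VV E (hd vs) (last vs) = length vs - 1"

definition graph_aut :: "'v set \<Rightarrow> ('v \<Rightarrow> 'v \<Rightarrow> bool) \<Rightarrow> ('v \<Rightarrow> 'v) \<Rightarrow> bool" where
  "graph_aut VV E \<sigma> \<longleftrightarrow> bij_betw \<sigma> VV VV \<and> (\<forall>u\<in>VV. \<forall>v\<in>VV. E u v \<longleftrightarrow> E (\<sigma> u) (\<sigma> v))"

definition geodesic_transitive :: "'v set \<Rightarrow> ('v \<Rightarrow> 'v \<Rightarrow> bool) \<Rightarrow> bool" where
  "geodesic_transitive VV E \<longleftrightarrow>
     (\<forall>xs ys. is_geodesic VV E xs \<and> is_geodesic VV E ys \<and> length xs = length ys \<longrightarrow>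
        (\<exists>\<sigma>. graph_aut VV E \<sigma> \<and> map \<sigma> xs = ys))"

definition is_point :: "('a::field ^ 'n) set \<Rightarrow> bool" where
  "is_point p \<longleftrightarrow> vec.subspace p \<and> vec.dim p = 1"

definition is_hyperplane :: "('a::field ^ 'n) set \<Rightarrow> bool" where
  "is_hyperplane K \<longleftrightarrow> vec.subspace K \<and> vec.dim K = CARD('n) - 1"

definition Delta1 :: "('a::field ^ 'n) set \<Rightarrow> ('a ^ 'n) set set" where
  "Delta1 H = {p. is_point p \<and> \<not> p \<subseteq> H}"

definition Delta2 :: "('a::field ^ 'n) set \<Rightarrow> ('a ^ 'n) set set" where
  "Delta2 w = {K. is_hyperplane K \<and> \<not> w \<subseteq> K}"

definition Gamma_adj :: "('a::field ^ 'n) set \<Rightarrow> ('a ^ 'n) set \<Rightarrow> ('a ^ 'n) set \<Rightarrow> ('a ^ 'n) set \<Rightarrow> bool" where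
  "Gamma_adj w H x y \<longleftrightarrow>
     (x \<in> Delta1 H \<and> y \<in> Delta2 w \<and> x \<subseteq> y) \<or> (y \<in> Delta1 H \<and> x \<in> Delta2 w \<and> y \<subseteq> x)"

end

theory Submission
  imports Defs
begin

definition dotp :: "'a::field^'n \<Rightarrow> 'a^'n \<Rightarrow> 'a" where
  "dotp c z = (\<Sum>i\<in>UNIV. c$i * z$i)"

definition Kc :: "'a::field^'n \<Rightarrow> ('a^'n) set" where
  "Kc c = {z. dotp c z = 0}"

definition Pv :: "'a::field^'n \<Rightarrow> ('a^'n) set" where
  "Pv v = vec.span {v}"

lemma dotp_add_right: "dotp c (x + y) = dotp c x + dotp c y"
  by (simp add: dotp_def sum.distrib algebra_simps)
lemma dotp_add_left: "dotp (x + y) c = dotp x c + dotp y c"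
  by (simp add: dotp_def sum.distrib algebra_simps)
lemma dotp_diff_right: "dotp c (x - y) = dotp c x - dotp c y"
  by (simp add: dotp_def sum_subtractf algebra_simps)
lemma dotp_diff_left: "dotp (x - y) c = dotp x c - dotp y c"
  by (simp add: dotp_def sum_subtractf algebra_simps)
lemma dotp_smult_right: "dotp c (k *s x) = k * dotp c x"
  by (simp add: dotp_def sum_distrib_left algebra_simps)
lemma dotp_smult_left: "dotp (k *s x) c = k * dotp x c"
  by (simp add: dotp_def sum_distrib_left algebra_simps)
lemma dotp_comm: "dotp x y = dotp y x"
  by (simp add: dotp_def mult.commute)
lemma dotp_zero_left[simp]: "dotp 0 x = 0" and dotp_zero_right[simp]: "dotp x 0 = 0"
  by (simp_all add: dotp_def)
lemma dotp_axis_left[simp]: "dotp (axis i 1) z = z$i"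
proof -
  have "(\<Sum>j\<in>UNIV. axis i 1 $ j * z$j) = (\<Sum>j\<in>UNIV. if i = j then z$j else 0)"
    by (rule sum.cong) (auto simp: axis_def)
  then show ?thesis by (simp add: dotp_def)
qed
lemma dotp_axis_right[simp]: "dotp z (axis i 1) = z$i"
  using dotp_axis_left dotp_comm by metis
lemma dotp_neg_left: "dotp (- x) c = - dotp x c"
  by (simp add: dotp_def sum_negf)
lemma dotp_neg_right: "dotp c (- x) = - dotp c x"
  by (simp add: dotp_def sum_negf)

lemmas dotp_simps = dotp_add_right dotp_add_left dotp_diff_right dotp_diff_left
  dotp_smult_right dotp_smult_left dotp_neg_left dotp_neg_right

lemma Pv_eq: "Pv v = range (\<lambda>k. k *s v)"
  by (simp add: Pv_def vec.span_singleton)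

lemma Pv_sub_Kc: "Pv v \<subseteq> Kc c \<longleftrightarrow> dotp c v = 0"
proof
  assume "Pv v \<subseteq> Kc c"
  moreover have "v \<in> Pv v" unfolding Pv_eq by (rule range_eqI[of _ _ 1]) simp
  ultimately show "dotp c v = 0" by (auto simp: Kc_def)
qed (auto simp: Pv_eq Kc_def dotp_smult_right)

lemma subspace_Kc: "vec.subspace (Kc c)"
  unfolding vec.subspace_def Kc_def by (simp add: dotp_simps)

lemma dotp_eq_zero_all: "(\<And>z. dotp c z = 0) \<Longrightarrow> c = 0"
  by (metis dotp_axis_right vec_eq_iff zero_index)

lemma nonzero_index: "(c::'a::zero^'n) \<noteq> 0 \<Longrightarrow> \<exists>i. c$i \<noteq> 0"
  by (metis vec_eq_iff zero_index)

lemma is_point_iff: "is_point p \<longleftrightarrow> (\<exists>v. v \<noteq> 0 \<and> p = Pv v)"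
proof
  assume "is_point p"
  then have sp: "vec.subspace p" and d: "vec.dim p = 1" by (auto simp: is_point_def)
  obtain B where B: "B \<subseteq> p" "vec.independent B" "p \<subseteq> vec.span B" "card B = vec.dim p"
    using vec.basis_exists by blast
  then obtain v where Bv: "B = {v}" using d by (auto simp: card_Suc_eq)
  have "vec.span B = p" using B sp by (metis vec.span_subspace)
  moreover have "v \<noteq> 0" using B(2) Bv vec.dependent_zero by blast
  ultimately show "\<exists>v. v \<noteq> 0 \<and> p = Pv v" using Bv by (auto simp: Pv_def)
next
  assume "\<exists>v. v \<noteq> 0 \<and> p = Pv v"
  then show "is_point p" by (auto simp: is_point_def Pv_def)
qed

lemma dim_Kc: fixes c :: "'a::field^'n" assumes "c \<noteq> 0" shows "vec.dim (Kc c) = CARD('n) - 1"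
proof -
  obtain i where ci: "c$i \<noteq> 0" using nonzero_index[OF assms] by blast
  have ni: "axis i 1 \<notin> Kc (c::'a::field^'n)" using ci by (simp add: Kc_def)
  have "vec.span (insert (axis i 1) (Kc c)) = UNIV"
  proof -
    { fix x :: "'a^'n"
      have "x - (dotp c x / c$i) *s axis i 1 \<in> Kc c"
        using ci by (simp add: Kc_def dotp_simps)
      then have "x \<in> vec.span (insert (axis i 1) (Kc c))"
        unfolding vec.span_insert using vec.span_base by blast }
    then show ?thesis by auto
  qed
  then have "vec.dim (insert (axis i 1) (Kc c)) = CARD('n)"
    by (metis vec.dim_UNIV vec.dim_span card_cart_basis)
  moreover have "vec.span (Kc c) = Kc c" using subspace_Kc vec.span_eq_iff by blast
  ultimately show ?thesis using ni by (simp add: vec.dim_insert)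
qed

lemma is_hyperplane_iff: fixes K :: "('a::field^'n) set" shows "is_hyperplane K \<longleftrightarrow> (\<exists>c. c \<noteq> 0 \<and> K = Kc c)"
proof
  assume "is_hyperplane K"
  then have sp: "vec.subspace K" and d: "vec.dim K = CARD('n) - 1" by (auto simp: is_hyperplane_def)
  have "K \<noteq> UNIV"
  proof
    assume "K = UNIV"
    then have "vec.dim K = CARD('n)" by (metis vec.dim_UNIV card_cart_basis)
    moreover have "0 < CARD('n)" by simp
    ultimately show False using d by linarith
  qed
  then obtain u where u: "u \<notin> K" by blast
  have spanK: "vec.span K = K" using sp vec.span_eq_iff by blast
  have u': "u \<notin> vec.span K" by (subst spanK) (rule u)
  have "0 < CARD('n)" by simp
  then have "vec.dim (insert u K) = CARD('n)"
    using u' d by (simp add: vec.dim_insert)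
  then have full: "vec.span (insert u K) = UNIV"
    by (metis vec.dim_eq_full vec.dimension_def card_cart_basis)
  have "\<forall>i. \<exists>k. axis i 1 - k *s u \<in> K"
  proof
    fix i
    have "axis i 1 \<in> vec.span (insert u K)" using full by simp
    then obtain k where "axis i 1 - k *s u \<in> vec.span K" unfolding vec.span_insert by blast
    then show "\<exists>k. axis i 1 - k *s u \<in> K" using spanK by auto
  qed
  then obtain f where f: "\<And>i. axis i 1 - f i *s u \<in> K" by metis
  define c :: "'a^'n" where "c = (\<chi> i. f i)"
  have key: "x - dotp c x *s u \<in> K" for x
  proof -
    have "x = (\<Sum>i\<in>UNIV. x$i *s axis i 1)" by (rule basis_expansion[symmetric])
    have "(\<Sum>i\<in>UNIV. x$i *s (axis i 1 - f i *s u)) \<in> K"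
      using f sp by (intro vec.subspace_sum vec.subspace_scale) auto
    moreover have "(\<Sum>i\<in>UNIV. x$i *s (axis i 1 - f i *s u)) = x - dotp c x *s u"
    proof -
      have "(\<Sum>i\<in>UNIV. x$i *s (axis i 1 - f i *s u)) = (\<Sum>i\<in>UNIV. x$i *s axis i 1) - (\<Sum>i\<in>UNIV. (x$i * f i) *s u)"
        by (simp add: vec.scale_right_diff_distrib sum_subtractf)
      also have "\<dots> = x - dotp c x *s u"
        by (simp add: basis_expansion dotp_def c_def vec.scale_sum_left[symmetric] mult.commute)
      finally show ?thesis .
    qed
    ultimately show ?thesis by simp
  qed
  have "K = Kc c"
  proof (intro set_eqI iffI)
    fix x assume x: "x \<in> K"
    show "x \<in> Kc c"
    proof (rule ccontr)
      assume "x \<notin> Kc c"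
      then have nz: "dotp c x \<noteq> 0" by (simp add: Kc_def)
      have "dotp c x *s u \<in> K"
        using vec.subspace_diff[OF sp x key[of x]] by simp
      then have "(1 / dotp c x) *s (dotp c x *s u) \<in> K" using sp vec.subspace_scale by blast
      then have "u \<in> K" using nz by simp
      with u show False by simp
    qed
  next
    fix x assume "x \<in> Kc c"
    then show "x \<in> K" using key[of x] by (simp add: Kc_def)
  qed
  moreover have "c \<noteq> 0" using calculation u by (auto simp: Kc_def)
  ultimately show "\<exists>c. c \<noteq> 0 \<and> K = Kc c" by blast
next
  assume "\<exists>c. c \<noteq> 0 \<and> K = Kc c"
  then show "is_hyperplane K" using subspace_Kc dim_Kc by (auto simp: is_hyperplane_def)
qed

definition giso :: "'v set \<Rightarrow> ('v \<Rightarrow> 'v \<Rightarrow> bool) \<Rightarrow> 'w set \<Rightarrow> ('w \<Rightarrow> 'w \<Rightarrow> bool) \<Rightarrow> ('v \<Rightarrow> 'w) \<Rightarrow> bool" where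
  "giso VV1 E1 VV2 E2 \<phi> \<longleftrightarrow> bij_betw \<phi> VV1 VV2 \<and> (\<forall>u\<in>VV1. \<forall>v\<in>VV1. E1 u v \<longleftrightarrow> E2 (\<phi> u) (\<phi> v))"

lemma graph_aut_iso: "graph_aut VV E \<sigma> \<longleftrightarrow> giso VV E VV E \<sigma>"
  by (simp add: graph_aut_def giso_def)

lemma iso_inv:
  assumes "giso VV1 E1 VV2 E2 \<phi>"
  shows "giso VV2 E2 VV1 E1 (inv_into VV1 \<phi>)"
proof -
  have b: "bij_betw \<phi> VV1 VV2" and e: "\<forall>u\<in>VV1. \<forall>v\<in>VV1. E1 u v \<longleftrightarrow> E2 (\<phi> u) (\<phi> v)"
    using assms by (auto simp: giso_def)
  have b': "bij_betw (inv_into VV1 \<phi>) VV2 VV1" using b by (rule bij_betw_inv_into)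
  show ?thesis unfolding giso_def
  proof (intro conjI ballI b')
    fix u v assume u: "u \<in> VV2" and v: "v \<in> VV2"
    have "inv_into VV1 \<phi> u \<in> VV1" "inv_into VV1 \<phi> v \<in> VV1"
      using b' u v bij_betwE by blast+
    moreover have "\<phi> (inv_into VV1 \<phi> u) = u" "\<phi> (inv_into VV1 \<phi> v) = v"
      using b u v by (metis bij_betw_inv_into_right)+
    ultimately show "E2 u v \<longleftrightarrow> E1 (inv_into VV1 \<phi> u) (inv_into VV1 \<phi> v)"
      using e by metis
  qed
qed

lemma iso_comp:
  assumes "giso VV1 E1 VV2 E2 \<phi>" "giso VV2 E2 VV3 E3 \<psi>"
  shows "giso VV1 E1 VV3 E3 (\<psi> \<circ> \<phi>)"
proof -
  have "bij_betw (\<psi> \<circ> \<phi>) VV1 VV3" using assms unfolding giso_def by (meson bij_betw_trans)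
  moreover have "\<forall>u\<in>VV1. \<forall>v\<in>VV1. E1 u v \<longleftrightarrow> E3 ((\<psi> \<circ> \<phi>) u) ((\<psi> \<circ> \<phi>) v)"
  proof (intro ballI)
    fix u v assume u: "u \<in> VV1" and v: "v \<in> VV1"
    have "\<phi> u \<in> VV2" "\<phi> v \<in> VV2" using assms(1) u v unfolding giso_def by (meson bij_betwE)+
    then show "E1 u v \<longleftrightarrow> E3 ((\<psi> \<circ> \<phi>) u) ((\<psi> \<circ> \<phi>) v)"
      using assms u v unfolding giso_def by simp
  qed
  ultimately show ?thesis by (simp add: giso_def)
qed

lemma iso_id: "giso VV E VV E id"
  by (simp add: giso_def)

lemma inv_into_iso_left:
  assumes "giso VV1 E1 VV2 E2 \<phi>" "x \<in> VV1"
  shows "inv_into VV1 \<phi> (\<phi> x) = x"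
  using assms by (meson bij_betw_imp_inj_on inv_into_f_f giso_def)

lemma inv_into_iso_right:
  assumes "giso VV1 E1 VV2 E2 \<phi>" "y \<in> VV2"
  shows "\<phi> (inv_into VV1 \<phi> y) = y"
  using assms by (meson bij_betw_inv_into_right giso_def)

lemma iso_in: "giso VV1 E1 VV2 E2 \<phi> \<Longrightarrow> x \<in> VV1 \<Longrightarrow> \<phi> x \<in> VV2"
  by (meson bij_betwE giso_def)

lemma walk_map:
  assumes "giso VV1 E1 VV2 E2 \<phi>" "is_walk VV1 E1 vs"
  shows "is_walk VV2 E2 (map \<phi> vs)"
proof -
  have s: "set vs \<subseteq> VV1" using assms(2) by (simp add: is_walk_def)
  show ?thesis
    unfolding is_walk_def
  proof (intro conjI allI impI)
    show "map \<phi> vs \<noteq> []" using assms(2) by (simp add: is_walk_def)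
    show "set (map \<phi> vs) \<subseteq> VV2" using s iso_in[OF assms(1)] by auto
    fix i assume i: "Suc i < length (map \<phi> vs)"
    then have "E1 (vs ! i) (vs ! Suc i)" using assms(2) by (simp add: is_walk_def)
    moreover have "vs ! i \<in> VV1" "vs ! Suc i \<in> VV1" using s i by auto
    ultimately show "E2 (map \<phi> vs ! i) (map \<phi> vs ! Suc i)"
      using assms(1) i by (simp add: giso_def)
  qed
qed

lemma walk_nonempty: "is_walk VV E vs \<Longrightarrow> vs \<noteq> []"
  by (simp add: is_walk_def)

lemma walk_set: "is_walk VV E vs \<Longrightarrow> set vs \<subseteq> VV"
  by (simp add: is_walk_def)

lemma gdist_iso:
  assumes "giso VV1 E1 VV2 E2 \<phi>" "u \<in> VV1" "v \<in> VV1"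
  shows "gdist VV2 E2 (\<phi> u) (\<phi> v) = gdist VV1 E1 u v"
proof -
  let ?\<psi> = "inv_into VV1 \<phi>"
  have "(\<exists>vs. is_walk VV2 E2 vs \<and> hd vs = \<phi> u \<and> last vs = \<phi> v \<and> length vs = Suc l) \<longleftrightarrow>
        (\<exists>vs. is_walk VV1 E1 vs \<and> hd vs = u \<and> last vs = v \<and> length vs = Suc l)" for l
  proof
    assume "\<exists>vs. is_walk VV2 E2 vs \<and> hd vs = \<phi> u \<and> last vs = \<phi> v \<and> length vs = Suc l"
    then obtain vs where vs: "is_walk VV2 E2 vs" "hd vs = \<phi> u" "last vs = \<phi> v" "length vs = Suc l" by blast
    have ne: "vs \<noteq> []" using vs(1) walk_nonempty by blast
    have "is_walk VV1 E1 (map ?\<psi> vs)" using walk_map[OF iso_inv[OF assms(1)] vs(1)] .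
    moreover have "hd (map ?\<psi> vs) = u" using ne vs(2) inv_into_iso_left[OF assms(1,2)] by (simp add: hd_map)
    moreover have "last (map ?\<psi> vs) = v" using ne vs(3) inv_into_iso_left[OF assms(1,3)] by (simp add: last_map)
    ultimately show "\<exists>vs. is_walk VV1 E1 vs \<and> hd vs = u \<and> last vs = v \<and> length vs = Suc l"
      using vs(4) by (intro exI[of _ "map ?\<psi> vs"]) simp
  next
    assume "\<exists>vs. is_walk VV1 E1 vs \<and> hd vs = u \<and> last vs = v \<and> length vs = Suc l"
    then obtain vs where vs: "is_walk VV1 E1 vs" "hd vs = u" "last vs = v" "length vs = Suc l" by blast
    have ne: "vs \<noteq> []" using vs(1) walk_nonempty by blast
    show "\<exists>vs. is_walk VV2 E2 vs \<and> hd vs = \<phi> u \<and> last vs = \<phi> v \<and> length vs = Suc l"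
      using walk_map[OF assms(1) vs(1)] ne vs by (intro exI[of _ "map \<phi> vs"]) (simp add: hd_map last_map)
  qed
  then show ?thesis unfolding gdist_def by (intro arg_cong[where f = Least] ext) blast
qed

lemma geodesic_map:
  assumes "giso VV1 E1 VV2 E2 \<phi>" "is_geodesic VV1 E1 xs"
  shows "is_geodesic VV2 E2 (map \<phi> xs)"
proof -
  have w: "is_walk VV1 E1 xs" and g: "gdist VV1 E1 (hd xs) (last xs) = length xs - 1"
    using assms(2) by (auto simp: is_geodesic_def)
  have ne: "xs \<noteq> []" using w walk_nonempty by blast
  have "hd xs \<in> VV1" "last xs \<in> VV1" using w ne walk_set by fastforce+
  then show ?thesis unfolding is_geodesic_def
    using walk_map[OF assms(1) w] gdist_iso[OF assms(1)] g ne by (simp add: hd_map last_map)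
qed

lemma GT_transfer:
  assumes "giso VV1 E1 VV2 E2 \<phi>" "geodesic_transitive VV1 E1"
  shows "geodesic_transitive VV2 E2"
  unfolding geodesic_transitive_def
proof (intro allI impI)
  fix xs ys assume h: "is_geodesic VV2 E2 xs \<and> is_geodesic VV2 E2 ys \<and> length xs = length ys"
  let ?\<psi> = "inv_into VV1 \<phi>"
  have i2: "giso VV2 E2 VV1 E1 ?\<psi>" using iso_inv[OF assms(1)] .
  have "is_geodesic VV1 E1 (map ?\<psi> xs)" "is_geodesic VV1 E1 (map ?\<psi> ys)"
    using h geodesic_map[OF i2] by blast+
  then obtain \<sigma> where \<sigma>: "graph_aut VV1 E1 \<sigma>" "map \<sigma> (map ?\<psi> xs) = map ?\<psi> ys"
    using assms(2) h unfolding geodesic_transitive_def by fastforce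
  have "giso VV2 E2 VV2 E2 (\<phi> \<circ> (\<sigma> \<circ> ?\<psi>))"
    using iso_comp[OF iso_comp[OF i2 \<sigma>(1)[unfolded graph_aut_iso]] assms(1)] by (simp add: comp_assoc)
  moreover have "map (\<phi> \<circ> (\<sigma> \<circ> ?\<psi>)) xs = ys"
  proof -
    have "map (\<phi> \<circ> (\<sigma> \<circ> ?\<psi>)) xs = map \<phi> (map \<sigma> (map ?\<psi> xs))" by simp
    also have "\<dots> = map \<phi> (map ?\<psi> ys)" using \<sigma>(2) by simp
    also have "\<dots> = ys"
      using h inv_into_iso_right[OF assms(1)] by (simp add: is_geodesic_def is_walk_def subset_iff map_idI)
    finally show ?thesis .
  qed
  ultimately show "\<exists>\<sigma>. graph_aut VV2 E2 \<sigma> \<and> map \<sigma> xs = ys" unfolding graph_aut_iso by blast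
qed

lemma gdist_le:
  assumes "is_walk VV E vs" "hd vs = u" "last vs = v"
  shows "gdist VV E u v \<le> length vs - 1"
proof -
  have "length vs = Suc (length vs - 1)" using assms(1) walk_nonempty by fastforce
  then have "\<exists>ws. is_walk VV E ws \<and> hd ws = u \<and> last ws = v \<and> length ws = Suc (length vs - 1)"
    using assms by (intro exI[of _ vs]) simp
  then show ?thesis unfolding gdist_def by (rule Least_le)
qed

lemma gdist_ex:
  assumes "is_walk VV E vs" "hd vs = u" "last vs = v"
  shows "\<exists>ws. is_walk VV E ws \<and> hd ws = u \<and> last ws = v \<and> length ws = Suc (gdist VV E u v)"
proof -
  have "length vs = Suc (length vs - 1)" using assms(1) walk_nonempty by fastforce
  then have "\<exists>ws. is_walk VV E ws \<and> hd ws = u \<and> last ws = v \<and> length ws = Suc (length vs - 1)"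
    using assms by (intro exI[of _ vs]) simp
  then show ?thesis unfolding gdist_def
    by (rule LeastI[where P="\<lambda>l. \<exists>ws. is_walk VV E ws \<and> hd ws = u \<and> last ws = v \<and> length ws = Suc l"])
qed

lemma walk_take:
  assumes "is_walk VV E xs" "0 < k"
  shows "is_walk VV E (take k xs)"
proof -
  have "xs \<noteq> []" "set xs \<subseteq> VV" "\<forall>i. Suc i < length xs \<longrightarrow> E (xs ! i) (xs ! Suc i)"
    using assms(1) by (auto simp: is_walk_def)
  moreover have "set (take k xs) \<subseteq> set xs" by (rule set_take_subset)
  ultimately show ?thesis using assms(2) unfolding is_walk_def by simp
qed

lemma walk_append:
  assumes "is_walk VV E ws" "is_walk VV E rs" "E (last ws) (hd rs)"
  shows "is_walk VV E (ws @ rs)"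
  unfolding is_walk_def
proof (intro conjI allI impI)
  show "ws @ rs \<noteq> []" using assms(1) by (simp add: is_walk_def)
  show "set (ws @ rs) \<subseteq> VV" using assms(1,2) by (simp add: is_walk_def)
  fix i assume i: "Suc i < length (ws @ rs)"
  have wne: "ws \<noteq> []" and rne: "rs \<noteq> []" using assms(1,2) by (auto simp: is_walk_def)
  consider "Suc i < length ws" | "Suc i = length ws" | "Suc i > length ws" by linarith
  then show "E ((ws @ rs) ! i) ((ws @ rs) ! Suc i)"
  proof cases
    case 1 then show ?thesis using assms(1) by (simp add: nth_append is_walk_def)
  next
    case 2
    then have "(ws @ rs) ! i = last ws" using wne by (simp add: nth_append last_conv_nth 2[symmetric])
    moreover have "(ws @ rs) ! Suc i = hd rs" using 2 rne by (simp add: nth_append hd_conv_nth)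
    ultimately show ?thesis using assms(3) by simp
  next
    case 3
    then have "Suc (i - length ws) < length rs" using i by auto
    then have "E (rs ! (i - length ws)) (rs ! Suc (i - length ws))" using assms(2) by (simp add: is_walk_def)
    moreover have "Suc i - length ws = Suc (i - length ws)" using 3 by simp
    ultimately show ?thesis using 3 by (simp add: nth_append)
  qed
qed

lemma walk_drop:
  assumes "is_walk VV E xs" "k < length xs"
  shows "is_walk VV E (drop k xs)"
proof -
  have "xs \<noteq> []" "set xs \<subseteq> VV" "\<forall>i. Suc i < length xs \<longrightarrow> E (xs ! i) (xs ! Suc i)"
    using assms(1) by (auto simp: is_walk_def)
  moreover have "set (drop k xs) \<subseteq> set xs" by (rule set_drop_subset)
  ultimately show ?thesis using assms(2) unfolding is_walk_def by simp
qed

lemma geodesic_take: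
  assumes g: "is_geodesic VV E xs" and k: "0 < k" "k \<le> length xs"
  shows "is_geodesic VV E (take k xs)"
proof -
  have w: "is_walk VV E xs" and gd: "gdist VV E (hd xs) (last xs) = length xs - 1"
    using g by (auto simp: is_geodesic_def)
  have ne: "xs \<noteq> []" using w walk_nonempty by blast
  let ?ys = "take k xs"
  have wy: "is_walk VV E ?ys" using walk_take[OF w k(1)] .
  have hy: "hd ?ys = hd xs" using k ne by (simp add: hd_take)
  have ly: "last ?ys = xs ! (k - 1)" proof -
    have "take k xs \<noteq> []" using k ne by simp
    then show ?thesis using k by (simp add: last_conv_nth min_def)
  qed
  have le: "gdist VV E (hd xs) (xs ! (k - 1)) \<le> k - 1"
    using gdist_le[OF wy hy ly] k by simp
  show ?thesis
  proof (rule ccontr)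
    assume "\<not> ?thesis"
    then have lt: "gdist VV E (hd xs) (xs ! (k - 1)) < k - 1"
      using le wy hy ly k by (simp add: is_geodesic_def)
    obtain ws where ws: "is_walk VV E ws" "hd ws = hd xs" "last ws = xs ! (k - 1)"
      "length ws = Suc (gdist VV E (hd xs) (xs ! (k - 1)))"
      using gdist_ex[OF wy hy ly] by blast
    show False
    proof (cases "k = length xs")
      case True
      then have "last ws = last xs" using ws(3) ne by (simp add: last_conv_nth)
      then have "gdist VV E (hd xs) (last xs) \<le> length ws - 1" using gdist_le[OF ws(1,2)] by simp
      then show False using gd ws(4) lt True by simp
    next
      case False
      then have kl: "k < length xs" using k by simp
      have wd: "is_walk VV E (drop k xs)" using walk_drop[OF w kl] .
      have "E (xs ! (k - 1)) (xs ! k)" using w kl k by (simp add: is_walk_def) (metis Suc_pred)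
      then have e: "E (last ws) (hd (drop k xs))" using ws(3) kl by (simp add: hd_drop_conv_nth)
      have wa: "is_walk VV E (ws @ drop k xs)" using walk_append[OF ws(1) wd e] .
      have "hd (ws @ drop k xs) = hd xs" using ws(1,2) walk_nonempty by fastforce
      moreover have "last (ws @ drop k xs) = last xs" using kl by simp
      ultimately have "gdist VV E (hd xs) (last xs) \<le> length (ws @ drop k xs) - 1"
        using gdist_le[OF wa] by simp
      then show False using gd ws(4) lt kl by simp
    qed
  qed
qed

type_synonym ('a,'n) lmap = "'a^'n \<Rightarrow> 'a^'n"

lemma point_image:
  fixes g :: "'a::field^'n \<Rightarrow> 'a^'n"
  assumes lin: "Vector_Spaces.linear (*s) (*s) g" and inj: "inj g" and p: "is_point p"
  shows "is_point (g ` p)"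
proof -
  have "vec.subspace (g ` p)" using p lin by (simp add: is_point_def vec.linear_subspace_image)
  moreover have "vec.dim (g ` p) = vec.dim p"
    using vec.dim_image_eq[OF lin] inj by (meson inj_on_subset subset_UNIV)
  ultimately show ?thesis using p by (simp add: is_point_def)
qed

lemma hyperplane_image:
  fixes g :: "'a::field^'n \<Rightarrow> 'a^'n"
  assumes lin: "Vector_Spaces.linear (*s) (*s) g" and inj: "inj g" and p: "is_hyperplane p"
  shows "is_hyperplane (g ` p)"
proof -
  have "vec.subspace (g ` p)" using p lin by (simp add: is_hyperplane_def vec.linear_subspace_image)
  moreover have "vec.dim (g ` p) = vec.dim p"
    using vec.dim_image_eq[OF lin] inj by (meson inj_on_subset subset_UNIV)
  ultimately show ?thesis using p by (simp add: is_hyperplane_def)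
qed

locale linbij =
  fixes g g' :: "'a::field^'n \<Rightarrow> 'a^'n"
  assumes lin: "Vector_Spaces.linear (*s) (*s) g" and lin': "Vector_Spaces.linear (*s) (*s) g'"
    and inv1: "\<And>x. g' (g x) = x" and inv2: "\<And>x. g (g' x) = x"
begin

lemma inj_g: "inj g" by (metis inv1 injI)
lemma inj_g': "inj g'" by (metis inv2 injI)
lemma img_inv1: "g' ` (g ` X) = X" by (simp add: image_image inv1)
lemma img_inv2: "g ` (g' ` X) = X" by (simp add: image_image inv2)

lemma sub_iff: "g ` X \<subseteq> g ` Y \<longleftrightarrow> X \<subseteq> Y"
  by (rule inj_image_subset_iff[OF inj_g])

lemma Delta1_img: "X \<in> Delta1 H \<Longrightarrow> g ` X \<in> Delta1 (g ` H)"
  using point_image[OF lin inj_g] sub_iff by (auto simp: Delta1_def)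
lemma Delta2_img: "X \<in> Delta2 w \<Longrightarrow> g ` X \<in> Delta2 (g ` w)"
  using hyperplane_image[OF lin inj_g] sub_iff by (auto simp: Delta2_def)
lemma Delta1_img': "X \<in> Delta1 H \<Longrightarrow> g' ` X \<in> Delta1 (g' ` H)"
  using point_image[OF lin' inj_g'] inj_image_subset_iff[OF inj_g'] by (auto simp: Delta1_def)
lemma Delta2_img': "X \<in> Delta2 w \<Longrightarrow> g' ` X \<in> Delta2 (g' ` w)"
  using hyperplane_image[OF lin' inj_g'] inj_image_subset_iff[OF inj_g'] by (auto simp: Delta2_def)

lemma Delta1_iff: "g ` X \<in> Delta1 (g ` H) \<longleftrightarrow> X \<in> Delta1 H"
  using Delta1_img Delta1_img'[of "g ` X" "g ` H"] img_inv1 by metis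
lemma Delta2_iff: "g ` X \<in> Delta2 (g ` w) \<longleftrightarrow> X \<in> Delta2 w"
  using Delta2_img Delta2_img'[of "g ` X" "g ` w"] img_inv1 by metis

lemma adj_iff: "Gamma_adj (g ` w) (g ` H) (g ` X) (g ` Y) \<longleftrightarrow> Gamma_adj w H X Y"
  unfolding Gamma_adj_def Delta1_iff Delta2_iff sub_iff ..

lemma iso_img: "giso (Delta1 H \<union> Delta2 w) (Gamma_adj w H)
   (Delta1 (g ` H) \<union> Delta2 (g ` w)) (Gamma_adj (g ` w) (g ` H)) (\<lambda>X. g ` X)"
  unfolding giso_def
proof (intro conjI ballI)
  show "bij_betw (\<lambda>X. g ` X) (Delta1 H \<union> Delta2 w) (Delta1 (g ` H) \<union> Delta2 (g ` w))"
  proof (rule bij_betw_byWitness[where f'="\<lambda>X. g' ` X"])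
    show "\<forall>a\<in>Delta1 H \<union> Delta2 w. g' ` g ` a = a" by (simp add: img_inv1)
    show "\<forall>a\<in>Delta1 (g ` H) \<union> Delta2 (g ` w). g ` g' ` a = a" by (simp add: img_inv2)
    show "(\<lambda>X. g ` X) ` (Delta1 H \<union> Delta2 w) \<subseteq> Delta1 (g ` H) \<union> Delta2 (g ` w)"
      using Delta1_img Delta2_img by blast
    show "(\<lambda>X. g' ` X) ` (Delta1 (g ` H) \<union> Delta2 (g ` w)) \<subseteq> Delta1 H \<union> Delta2 w"
      using Delta1_img' Delta2_img' img_inv1 by fastforce
  qed
qed (simp add: adj_iff)

lemma aut_img:
  assumes "g ` w = w" "g ` H = H"
  shows "graph_aut (Delta1 H \<union> Delta2 w) (Gamma_adj w H) (\<lambda>X. g ` X)"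
  unfolding graph_aut_iso using iso_img[of H w] unfolding assms .

end

definition el :: "'a::field^'n \<Rightarrow> 'a^'n \<Rightarrow> 'a^'n \<Rightarrow> 'a^'n" where
  "el \<alpha> u z = z + dotp \<alpha> z *s u"

lemma lin_el: "Vector_Spaces.linear (*s) (*s) (el \<alpha> u)"
  unfolding Vector_Spaces.linear_iff
  by (simp add: vec.vector_space_axioms el_def dotp_simps algebra_simps vec.scale_left_distrib
     vec.scale_right_distrib)

definition elinv :: "'a::field^'n \<Rightarrow> 'a^'n \<Rightarrow> 'a^'n" where
  "elinv \<alpha> u = (- (1 / (1 + dotp \<alpha> u))) *s \<alpha>"

lemma el_inv1:
  assumes "1 + dotp \<alpha> u \<noteq> 0"
  shows "el (elinv \<alpha> u) u (el \<alpha> u z) = z"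
proof -
  have "dotp \<alpha> (el \<alpha> u z) = dotp \<alpha> z * (1 + dotp \<alpha> u)"
    by (simp add: el_def dotp_simps algebra_simps)
  then have "dotp (elinv \<alpha> u) (el \<alpha> u z) = - dotp \<alpha> z"
    using assms by (simp add: elinv_def dotp_simps)
  then show ?thesis by (simp add: el_def[of "elinv \<alpha> u"]) (simp add: el_def)
qed

lemma el_inv2:
  assumes "1 + dotp \<alpha> u \<noteq> 0"
  shows "el \<alpha> u (el (elinv \<alpha> u) u z) = z"
proof -
  let ?s = "1 + dotp \<alpha> u"
  have "dotp \<alpha> (el (elinv \<alpha> u) u z) = dotp \<alpha> z - dotp \<alpha> z * dotp \<alpha> u / ?s"
    by (simp add: el_def elinv_def dotp_simps algebra_simps)
  also have "\<dots> = dotp \<alpha> z / ?s"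
    using assms by (simp add: field_simps)
  finally have e: "dotp \<alpha> (el (elinv \<alpha> u) u z) = dotp \<alpha> z / ?s" .
  have "el \<alpha> u (el (elinv \<alpha> u) u z) = z - (dotp \<alpha> z / ?s) *s u + (dotp \<alpha> z / ?s) *s u"
    unfolding el_def[of \<alpha>] e by (simp add: el_def elinv_def dotp_simps)
  then show ?thesis by simp
qed

lemma elinv_cond: "1 + dotp \<alpha> u \<noteq> 0 \<Longrightarrow> 1 + dotp (elinv \<alpha> u) u \<noteq> 0"
  by (simp add: elinv_def dotp_simps field_simps)

lemma linbij_el: "1 + dotp \<alpha> u \<noteq> 0 \<Longrightarrow> linbij (el \<alpha> u) (el (elinv \<alpha> u) u)"
  unfolding linbij_def using lin_el el_inv1 el_inv2 by blast

lemma linbij_comp: "linbij g g' \<Longrightarrow> linbij h h' \<Longrightarrow> linbij (g \<circ> h) (h' \<circ> g')"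
  unfolding linbij_def by (auto intro: Vector_Spaces.linear_compose)

lemma img_Pv: "Vector_Spaces.linear (*s) (*s) g \<Longrightarrow> g ` Pv v = Pv (g v)"
  unfolding Pv_def by (simp add: vec.linear_span_image[symmetric])

lemma img_Kc:
  assumes "linbij g g'" "\<And>z. dotp c' (g z) = l * dotp c z" "l \<noteq> 0"
  shows "g ` Kc c = Kc c'"
proof (intro set_eqI iffI)
  fix y assume "y \<in> g ` Kc c" then show "y \<in> Kc c'" using assms by (auto simp: Kc_def)
next
  fix y assume y: "y \<in> Kc c'"
  have "y = g (g' y)" using assms(1) linbij.inv2 by metis
  moreover have "dotp c (g' y) = 0"
    using assms(2)[of "g' y"] assms(3) y \<open>y = g (g' y)\<close> by (auto simp: Kc_def)
  ultimately show "y \<in> g ` Kc c" by (auto simp: Kc_def)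
qed

lemma Pv_scale: "k \<noteq> 0 \<Longrightarrow> Pv (k *s v) = Pv v"
  unfolding Pv_eq
proof (intro set_eqI iffI)
  fix x assume "k \<noteq> 0" "x \<in> range (\<lambda>t. t *s v)"
  then obtain t where "x = t *s v" by blast
  then have "x = (t / k) *s (k *s v)" using \<open>k \<noteq> 0\<close> by simp
  then show "x \<in> range (\<lambda>t. t *s (k *s v))" by blast
next
  fix x assume "x \<in> range (\<lambda>t. t *s (k *s v))"
  then obtain t where "x = t *s (k *s v)" by blast
  then have "x = (t * k) *s v" by simp
  then show "x \<in> range (\<lambda>t. t *s v)" by blast
qed

lemma Kc_scale: "k \<noteq> 0 \<Longrightarrow> Kc (k *s c) = Kc c"
  by (auto simp: Kc_def dotp_simps)

lemma ker_perp:
  fixes c d :: "'a::field^'n"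
  assumes "c \<noteq> 0"
  shows "(\<forall>x. dotp c x = 0 \<longrightarrow> dotp d x = 0) \<longleftrightarrow> (\<exists>t. d = t *s c)"
proof
  assume h: "\<forall>x. dotp c x = 0 \<longrightarrow> dotp d x = 0"
  obtain i where ci: "c$i \<noteq> 0" using nonzero_index[OF assms] by blast
  have dj: "d$j = (d$i / c$i) * c$j" for j
  proof -
    have "dotp c (axis j 1 - (c$j / c$i) *s axis i 1) = 0" using ci by (simp add: dotp_simps)
    then have "dotp d (axis j 1 - (c$j / c$i) *s axis i 1) = 0" using h by (rule_tac mp[OF spec[OF h]])
    then have "d$j = (c$j / c$i) * d$i" by (simp add: dotp_simps)
    then show ?thesis by (simp only: mult.commute times_divide_eq_left times_divide_eq_right)
  qed
  have "d = (d$i / c$i) *s c" by (rule vec_eq_iff[THEN iffD2], rule allI) (metis dj vector_smult_component)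
  then show "\<exists>t. d = t *s c" by blast
next
  assume "\<exists>t. d = t *s c"
  then obtain t where "d = t *s c" by blast
  then show "\<forall>x. dotp c x = 0 \<longrightarrow> dotp d x = 0" by (simp add: dotp_simps)
qed

lemma pick_vec:
  fixes y :: "'a::field^'n"
  assumes "y \<noteq> 0"
  shows "\<exists>\<beta>. \<beta>$p = 1 \<and> dotp \<beta> y \<noteq> 0 \<and> (\<forall>k. \<beta>$k \<noteq> 0 \<longrightarrow> k = p \<or> y$k \<noteq> 0)"
proof (cases "y$p = 0")
  case False
  have "(axis p 1 :: 'a^'n)$p = 1" "\<forall>k. (axis p 1 :: 'a^'n)$k \<noteq> 0 \<longrightarrow> k = p" by (auto simp: axis_def)
  moreover have "dotp (axis p 1) y \<noteq> 0" using False by simp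
  ultimately show ?thesis by blast
next
  case True
  obtain j where j: "y$j \<noteq> 0" using nonzero_index[OF assms] by blast
  then have jp: "j \<noteq> p" using True by auto
  show ?thesis
  proof (intro exI[of _ "axis p 1 + axis j 1"] conjI)
    show "(axis p 1 + axis j 1 :: 'a^'n)$p = 1" using jp by (simp add: axis_def)
    show "dotp (axis p 1 + axis j 1) y \<noteq> 0" using True j by (simp add: dotp_simps)
    show "\<forall>k. (axis p 1 + axis j 1 :: 'a^'n)$k \<noteq> 0 \<longrightarrow> k = p \<or> y$k \<noteq> 0" using j by (auto simp: axis_def)
  qed
qed

lemma is_walk_single: "is_walk VV E [x] \<longleftrightarrow> x \<in> VV"
  by (simp add: is_walk_def)

lemma is_walk_Cons2: "is_walk VV E (x # y # rest) \<longleftrightarrow> x \<in> VV \<and> E x y \<and> is_walk VV E (y # rest)"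
proof
  assume h: "is_walk VV E (x # y # rest)"
  then have "E x y" unfolding is_walk_def by (metis length_Cons nth_Cons_0 nth_Cons_Suc zero_less_Suc Suc_less_eq)
  moreover have "is_walk VV E (y # rest)"
    using h unfolding is_walk_def by (auto simp del: nth_Cons_Suc)
  ultimately show "x \<in> VV \<and> E x y \<and> is_walk VV E (y # rest)" using h by (simp add: is_walk_def)
next
  assume h: "x \<in> VV \<and> E x y \<and> is_walk VV E (y # rest)"
  show "is_walk VV E (x # y # rest)"
    unfolding is_walk_def
  proof (intro conjI allI impI)
    show "x # y # rest \<noteq> []" by simp
    show "set (x # y # rest) \<subseteq> VV" using h by (simp add: is_walk_def)
    fix i assume i: "Suc i < length (x # y # rest)"
    show "E ((x # y # rest) ! i) ((x # y # rest) ! Suc i)"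
    proof (cases i)
      case 0 then show ?thesis using h by simp
    next
      case (Suc j)
      then have "Suc j < length (y # rest)" using i by simp
      then have "E ((y # rest) ! j) ((y # rest) ! Suc j)" using h by (simp add: is_walk_def)
      then show ?thesis using Suc by simp
    qed
  qed
qed

locale std =
  fixes a b d :: "'n::finite" and fty :: "'a::field itself"
  assumes ab: "a \<noteq> b" and ad: "a \<noteq> d" and bd: "b \<noteq> d"
begin

definition ea :: "'a^'n" where "ea = axis a 1"
definition eb :: "'a^'n" where "eb = axis b 1"
definition ed :: "'a^'n" where "ed = axis d 1"
definition ws :: "('a^'n) set" where "ws = Pv ea"
definition Hs :: "('a^'n) set" where "Hs = Kc eb"
definition VV :: "('a^'n) set set" where "VV = Delta1 Hs \<union> Delta2 ws"
definition EE where "EE = Gamma_adj ws Hs"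

lemma ba: "b \<noteq> a" and da: "d \<noteq> a" and db: "d \<noteq> b" using ab ad bd by auto

lemma comps[simp]:
  "ea$a = 1" "ea$b = 0" "ea$d = 0" "eb$a = 0" "eb$b = 1" "eb$d = 0" "ed$a = 0" "ed$b = 0" "ed$d = 1"
  by (simp_all add: ea_def eb_def ed_def axis_def ab ad bd ba da db)

lemma dotp_e[simp]:
  "dotp x ea = x$a" "dotp ea x = x$a" "dotp x eb = x$b" "dotp eb x = x$b" "dotp x ed = x$d" "dotp ed x = x$d"
  by (simp_all add: ea_def eb_def ed_def)

lemma card3: "3 \<le> CARD('n)"
proof -
  have "card {a, b, d} = 3" using ab ad bd by simp
  moreover have "card {a, b, d} \<le> CARD('n)" by (rule card_mono) auto
  ultimately show ?thesis by simp
qed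

lemma D1_iff: "X \<in> Delta1 Hs \<longleftrightarrow> (\<exists>v. v$b \<noteq> 0 \<and> X = Pv v)"
proof
  assume "X \<in> Delta1 Hs"
  then obtain v where v: "v \<noteq> 0" "X = Pv v" "\<not> Pv v \<subseteq> Kc eb"
    by (auto simp: Delta1_def is_point_iff Hs_def)
  then have "v$b \<noteq> 0" by (simp add: Pv_sub_Kc)
  then show "\<exists>v. v$b \<noteq> 0 \<and> X = Pv v" using v by blast
next
  assume "\<exists>v. v$b \<noteq> 0 \<and> X = Pv v"
  then obtain v where v: "v$b \<noteq> 0" "X = Pv v" by blast
  then have "v \<noteq> 0" by auto
  then show "X \<in> Delta1 Hs" using v by (auto simp: Delta1_def is_point_iff Hs_def Pv_sub_Kc)
qed

lemma D2_iff: "X \<in> Delta2 ws \<longleftrightarrow> (\<exists>c. c$a \<noteq> 0 \<and> X = Kc c)"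
proof
  assume "X \<in> Delta2 ws"
  then obtain c where c: "c \<noteq> 0" "X = Kc c" "\<not> Pv ea \<subseteq> Kc c"
    by (auto simp: Delta2_def is_hyperplane_iff ws_def)
  then have "c$a \<noteq> 0" by (simp add: Pv_sub_Kc)
  then show "\<exists>c. c$a \<noteq> 0 \<and> X = Kc c" using c by blast
next
  assume "\<exists>c. c$a \<noteq> 0 \<and> X = Kc c"
  then obtain c where c: "c$a \<noteq> 0" "X = Kc c" by blast
  then have "c \<noteq> 0" by auto
  then show "X \<in> Delta2 ws" using c by (auto simp: Delta2_def is_hyperplane_iff ws_def Pv_sub_Kc)
qed

lemma Pv_ne_Kc: fixes v c :: "'a^'n" shows "Pv v \<noteq> Kc c"
proof
  assume e: "Pv v = Kc c"
  have "vec.dim (Pv v) \<le> 1" by (simp add: Pv_def)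
  moreover have "CARD('n) - 1 \<le> vec.dim (Kc c)"
  proof (cases "c = 0")
    case True
    then have "Kc c = UNIV" by (simp add: Kc_def)
    then show ?thesis by (simp add: card_cart_basis)
  qed (simp add: dim_Kc)
  ultimately show False using e card3 by simp
qed

lemma Kc_notin_D1: "Kc (c::'a^'n) \<notin> Delta1 Hs"
  using Pv_ne_Kc by (fastforce simp: D1_iff)
lemma Pv_notin_D2: "Pv (v::'a^'n) \<notin> Delta2 ws"
  using Pv_ne_Kc by (fastforce simp: D2_iff)

lemma Pv_in: "(v::'a^'n)$b \<noteq> 0 \<Longrightarrow> Pv v \<in> Delta1 Hs" using D1_iff by blast
lemma Kc_in: "(c::'a^'n)$a \<noteq> 0 \<Longrightarrow> Kc c \<in> Delta2 ws" using D2_iff by blast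
lemma Pv_inV: "(v::'a^'n)$b \<noteq> 0 \<Longrightarrow> Pv v \<in> VV" using Pv_in by (simp add: VV_def)
lemma Kc_inV: "(c::'a^'n)$a \<noteq> 0 \<Longrightarrow> Kc c \<in> VV" using Kc_in by (simp add: VV_def)

lemma VV_cases[consumes 1, case_names P K]:
  assumes "X \<in> VV"
  obtains (P) v :: "'a^'n" where "v$b \<noteq> 0" "X = Pv v" | (K) c :: "'a^'n" where "c$a \<noteq> 0" "X = Kc c"
  using assms unfolding VV_def Un_iff D1_iff D2_iff by blast

lemma nz_b: "v$b \<noteq> 0 \<Longrightarrow> (v::'a^'n) \<noteq> 0" by auto
lemma nz_a: "c$a \<noteq> 0 \<Longrightarrow> (c::'a^'n) \<noteq> 0" by auto

lemma EE_PK: "(v::'a^'n)$b \<noteq> 0 \<Longrightarrow> c$a \<noteq> 0 \<Longrightarrow> EE (Pv v) (Kc c) \<longleftrightarrow> dotp c v = 0"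
  unfolding EE_def Gamma_adj_def
  using Pv_in Kc_in Kc_notin_D1 Pv_sub_Kc by blast
lemma EE_KP: "(v::'a^'n)$b \<noteq> 0 \<Longrightarrow> c$a \<noteq> 0 \<Longrightarrow> EE (Kc c) (Pv v) \<longleftrightarrow> dotp c v = 0"
  unfolding EE_def Gamma_adj_def
  using Pv_in Kc_in Kc_notin_D1 Pv_sub_Kc by blast
lemma EE_PP: "(v::'a^'n)$b \<noteq> 0 \<Longrightarrow> \<not> EE (Pv v) (Pv v')"
  unfolding EE_def Gamma_adj_def using Pv_notin_D2 by blast
lemma EE_KK: "(c::'a^'n)$a \<noteq> 0 \<Longrightarrow> \<not> EE (Kc c) (Kc c')"
  unfolding EE_def Gamma_adj_def using Kc_notin_D1 by blast
lemma EE_VV: "EE x y \<Longrightarrow> x \<in> VV \<and> y \<in> VV"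
  unfolding EE_def Gamma_adj_def VV_def by blast

end

context std begin

lemma aut_el:
  fixes \<alpha> u :: "'a^'n"
  assumes nz: "1 + dotp \<alpha> u \<noteq> 0" and ub: "u$b = 0" and au: "\<alpha>$a = 0 \<or> u = ea"
  shows "graph_aut VV EE (\<lambda>X. el \<alpha> u ` X)"
proof -
  interpret L: linbij "el \<alpha> u" "el (elinv \<alpha> u) u" using linbij_el[OF nz] .
  have "el \<alpha> u ` ws = ws"
  proof -
    have "el \<alpha> u ` ws = Pv (el \<alpha> u ea)" unfolding ws_def by (rule img_Pv[OF lin_el])
    also have "\<dots> = Pv ea"
    proof (cases "\<alpha>$a = 0")
      case True then show ?thesis by (simp add: el_def)
    next
      case False
      then have u: "u = ea" using au by simp
      then have e: "(1 + \<alpha>$a) *s ea = el \<alpha> u ea" by (simp add: el_def vec.scale_left_distrib)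
      have "1 + \<alpha>$a \<noteq> 0" using nz u by simp
      then show ?thesis using Pv_scale e by metis
    qed
    finally show ?thesis by (simp add: ws_def)
  qed
  moreover have "el \<alpha> u ` Hs = Hs"
    unfolding Hs_def by (rule img_Kc[where l=1]) (auto simp: el_def ub dotp_simps intro: linbij_el[OF nz])
  ultimately show ?thesis unfolding VV_def EE_def by (rule L.aut_img)
qed

lemma aut_comp: "graph_aut VV EE \<sigma> \<Longrightarrow> graph_aut VV EE \<tau> \<Longrightarrow> graph_aut VV EE (\<sigma> \<circ> \<tau>)"
  unfolding graph_aut_iso by (rule iso_comp[rotated])

lemma aut_id: "graph_aut VV EE id"
  unfolding graph_aut_iso by (rule iso_id)

lemma img_el_Pv: "el \<alpha> u ` Pv v = Pv (el \<alpha> u v)"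
  by (rule img_Pv[OF lin_el])

section \<open>Duality\<close>

definition tr :: "'n \<Rightarrow> 'n" where "tr i = (if i = a then b else if i = b then a else i)"
definition sw :: "'a^'n \<Rightarrow> 'a^'n" where "sw x = (\<chi> i. x $ tr i)"

lemma tr_tr[simp]: "tr (tr i) = i" by (simp add: tr_def)
lemma sw_sw[simp]: "sw (sw x) = x" by (simp add: sw_def vec_eq_iff)
lemma sw_a[simp]: "sw x $ a = x $ b" and sw_b[simp]: "sw x $ b = x $ a"
  by (simp_all add: sw_def tr_def ba)
lemma sw_scale: "sw (k *s x) = k *s sw x" by (simp add: sw_def vec_eq_iff)

lemma dotp_sw: "dotp (sw x) (sw y) = dotp x y"
  unfolding dotp_def sw_def
  by (rule sum.reindex_bij_witness[of _ tr tr]) auto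

lemma dotp_sw2: "dotp (sw x) y = dotp x (sw y)"
  using dotp_sw[of x "sw y"] by simp

definition Dl :: "('a^'n) set \<Rightarrow> ('a^'n) set" where
  "Dl X = {y. \<forall>x\<in>X. dotp (sw x) y = 0}"

lemma Dl_Pv: "Dl (Pv v) = Kc (sw v)"
  unfolding Dl_def Kc_def Pv_eq by (auto simp: sw_scale dotp_simps)

lemma Dl_Kc:
  assumes "c \<noteq> 0"
  shows "Dl (Kc c) = Pv (sw c)"
proof (intro set_eqI)
  fix y
  have "y \<in> Dl (Kc c) \<longleftrightarrow> (\<forall>x. dotp c x = 0 \<longrightarrow> dotp (sw y) x = 0)"
  proof -
    have "\<And>x. dotp (sw x) y = dotp (sw y) x" using dotp_sw2 dotp_comm by metis
    then show ?thesis by (simp add: Dl_def Kc_def)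
  qed
  also have "\<dots> \<longleftrightarrow> (\<exists>t. sw y = t *s c)" by (rule ker_perp[OF assms])
  also have "\<dots> \<longleftrightarrow> (\<exists>t. y = t *s sw c)" by (metis sw_sw sw_scale)
  also have "\<dots> \<longleftrightarrow> y \<in> Pv (sw c)" by (auto simp: Pv_eq)
  finally show "y \<in> Dl (Kc c) \<longleftrightarrow> y \<in> Pv (sw c)" .
qed

lemma Dl_inV: assumes "X \<in> VV" shows "Dl X \<in> VV \<and> Dl (Dl X) = X"
using assms proof (cases rule: VV_cases)
  case (P v)
  have "sw v $ a \<noteq> 0" using P by simp
  then show ?thesis using P by (simp add: Dl_Pv Kc_inV Dl_Kc nz_a)
next
  case (K c)
  have "sw c $ b \<noteq> 0" using K by simp
  then show ?thesis using K by (simp add: Dl_Kc nz_a Pv_inV Dl_Pv)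
qed

lemma aut_Dl: "graph_aut VV EE Dl"
  unfolding graph_aut_def
proof (intro conjI ballI)
  show "bij_betw Dl VV VV"
    by (rule bij_betw_byWitness[where f'=Dl]) (use Dl_inV in auto)
  fix X Y assume X: "X \<in> VV" and Y: "Y \<in> VV"
  show "EE X Y \<longleftrightarrow> EE (Dl X) (Dl Y)"
  using X proof (cases rule: VV_cases)
    case (P v)
    show ?thesis
    using Y proof (cases rule: VV_cases)
      case (P v')
      then show ?thesis using \<open>v$b \<noteq> 0\<close> \<open>X = Pv v\<close> by (simp add: EE_PP Dl_Pv EE_KK)
    next
      case (K c)
      then show ?thesis using \<open>v$b \<noteq> 0\<close> \<open>X = Pv v\<close>
        by (simp add: EE_PK Dl_Pv Dl_Kc nz_a EE_KP dotp_sw dotp_comm)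
    qed
  next
    case (K c)
    show ?thesis
    using Y proof (cases rule: VV_cases)
      case (P v)
      then show ?thesis using \<open>c$a \<noteq> 0\<close> \<open>X = Kc c\<close>
        by (simp add: EE_KP Dl_Pv Dl_Kc nz_a EE_PK dotp_sw dotp_comm)
    next
      case (K c')
      then show ?thesis using \<open>c$a \<noteq> 0\<close> \<open>X = Kc c\<close> by (simp add: EE_KK Dl_Kc nz_a EE_PP)
    qed
  qed
qed

end

context std begin

definition P0 where "P0 = Pv eb"
definition K1 where "K1 = Kc ea"
definition P2 where "P2 = Pv (eb + ed)"
definition c3 where "c3 = ea + eb - ed"
definition K3 where "K3 = Kc c3"
definition P4 where "P4 = Pv (eb - ea)"
definition SS where "SS = [P0, K1, P2, K3, P4]"

lemma c3_comps[simp]: "c3$a = 1" "c3$b = 1" "c3$d = -1" by (simp_all add: c3_def)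

lemma P0_in: "P0 \<in> VV" and K1_in: "K1 \<in> VV" and P2_in: "P2 \<in> VV" and K3_in: "K3 \<in> VV"
  and P4_in: "P4 \<in> VV"
  by (simp_all add: P0_def K1_def P2_def K3_def P4_def Pv_inV Kc_inV)

lemma SS_in: "set SS \<subseteq> VV" using P0_in K1_in P2_in K3_in P4_in by (simp add: SS_def)

lemma norm_v: "v$b \<noteq> 0 \<Longrightarrow> Pv ((1 / v$b) *s v) = Pv v"
  by (simp add: Pv_scale)
lemma norm_c: "c$a \<noteq> 0 \<Longrightarrow> Kc ((1 / c$a) *s c) = Kc c"
  by (simp add: Kc_scale)

lemma L0_P:
  assumes "(v::'a^'n)$b \<noteq> 0"
  shows "\<exists>\<sigma>. graph_aut VV EE \<sigma> \<and> \<sigma> P0 = Pv v"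
proof -
  define v' where "v' = (1 / v$b) *s v"
  have vb: "v'$b = 1" using assms by (simp add: v'_def)
  have "graph_aut VV EE (\<lambda>X. el eb (v' - eb) ` X)"
    by (rule aut_el) (simp_all add: dotp_simps vb)
  moreover have "el eb (v' - eb) ` P0 = Pv v"
  proof -
    have "el eb (v' - eb) eb = v'" using vb by (simp add: el_def)
    then show ?thesis unfolding P0_def img_el_Pv using norm_v[OF assms] by (simp add: v'_def)
  qed
  ultimately show ?thesis by blast
qed

lemma L0:
  assumes "u \<in> VV"
  shows "\<exists>\<sigma>. graph_aut VV EE \<sigma> \<and> \<sigma> P0 = u"
  using assms
proof (cases rule: VV_cases)
  case (P v) then show ?thesis using L0_P by blast
next
  case (K c)
  then have "sw c $ b \<noteq> 0" by simp
  then obtain \<tau> where \<tau>: "graph_aut VV EE \<tau>" "\<tau> P0 = Pv (sw c)" using L0_P by blast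
  have "graph_aut VV EE (Dl \<circ> \<tau>)" using aut_comp[OF aut_Dl \<tau>(1)] .
  moreover have "(Dl \<circ> \<tau>) P0 = u" using \<tau>(2) K by (simp add: Dl_Pv)
  ultimately show ?thesis by blast
qed

lemma L1:
  assumes "EE P0 x"
  shows "\<exists>\<sigma>. graph_aut VV EE \<sigma> \<and> \<sigma> P0 = P0 \<and> \<sigma> K1 = x"
proof -
  have "x \<in> VV" using EE_VV assms by blast
  then show ?thesis
  proof (cases rule: VV_cases)
    case (P v) then show ?thesis using assms EE_PP[of eb v] by (simp add: P0_def)
  next
    case (K c)
    have cb: "c$b = 0" using assms K EE_PK[of eb c] by (simp add: P0_def)
    define c' where "c' = (1 / c$a) *s c"
    have c'a: "c'$a = 1" and c'b: "c'$b = 0" using K cb by (simp_all add: c'_def)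
    define \<alpha> where "\<alpha> = ea - c'"
    have "graph_aut VV EE (\<lambda>X. el \<alpha> ea ` X)"
      by (rule aut_el) (simp_all add: \<alpha>_def c'a)
    moreover have "el \<alpha> ea ` P0 = P0"
      unfolding P0_def img_el_Pv by (simp add: el_def \<alpha>_def c'b)
    moreover have "el \<alpha> ea ` K1 = x"
    proof -
      have "el \<alpha> ea ` Kc ea = Kc c'"
        by (rule img_Kc[where l=1]) (auto simp: el_def \<alpha>_def c'a dotp_simps intro: linbij_el)
      then show ?thesis using K by (simp add: K1_def c'_def norm_c)
    qed
    ultimately show ?thesis by blast
  qed
qed


lemma L2:
  assumes "EE K1 x" "x \<noteq> P0"
  shows "\<exists>\<sigma>. graph_aut VV EE \<sigma> \<and> \<sigma> P0 = P0 \<and> \<sigma> K1 = K1 \<and> \<sigma> P2 = x"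
proof -
  have "x \<in> VV" using EE_VV assms by blast
  then show ?thesis
  proof (cases rule: VV_cases)
    case (K c) then show ?thesis using assms EE_KK[of ea c] by (simp add: K1_def)
  next
    case (P v)
    have va: "v$a = 0" using assms P EE_KP[of v ea] by (simp add: K1_def)
    define v' where "v' = (1 / v$b) *s v"
    have v'b: "v'$b = 1" and v'a: "v'$a = 0" using P va by (simp_all add: v'_def)
    have "Pv v' = Pv v" unfolding v'_def using P(1) by (rule norm_v)
    then have xv': "x = Pv v'" using P(2) by simp
    define y where "y = v' - eb"
    have ya: "y$a = 0" and yb: "y$b = 0" using v'a v'b by (simp_all add: y_def)
    have yne: "y \<noteq> 0"
    proof
      assume "y = 0" then have "v' = eb" by (simp add: y_def)
      then show False using assms(2) xv' by (simp add: P0_def)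
    qed
    obtain \<beta> where \<beta>: "\<beta>$d = 1" "dotp \<beta> y \<noteq> 0" "\<forall>k. \<beta>$k \<noteq> 0 \<longrightarrow> k = d \<or> y$k \<noteq> 0"
      using pick_vec[OF yne, of d] by blast
    have \<beta>a: "\<beta>$a = 0" using \<beta>(3) ya ad by blast
    have \<beta>b: "\<beta>$b = 0" using \<beta>(3) yb bd by blast
    define u where "u = y - ed"
    have ub: "u$b = 0" and ua: "u$a = 0" using yb ya by (simp_all add: u_def)
    have nz: "1 + dotp \<beta> u \<noteq> 0" using \<beta>(1,2) by (simp add: u_def dotp_simps)
    have "graph_aut VV EE (\<lambda>X. el \<beta> u ` X)" by (rule aut_el[OF nz ub]) (simp add: \<beta>a)
    moreover have "el \<beta> u ` P0 = P0"
      unfolding P0_def img_el_Pv by (simp add: el_def \<beta>b)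
    moreover have "el \<beta> u ` K1 = K1"
      unfolding K1_def by (rule img_Kc[where l=1]) (auto simp: el_def ua dotp_simps intro: linbij_el[OF nz])
    moreover have "el \<beta> u ` P2 = x"
    proof -
      have "el \<beta> u (eb + ed) = v'"
        using \<beta>(1) \<beta>b by (simp add: el_def dotp_simps u_def y_def)
      then show ?thesis unfolding P2_def img_el_Pv xv' by simp
    qed
    ultimately show ?thesis by blast
  qed
qed

lemma L3:
  assumes "EE P2 x" "\<not> EE P0 x"
  shows "\<exists>\<sigma>. graph_aut VV EE \<sigma> \<and> \<sigma> P0 = P0 \<and> \<sigma> K1 = K1 \<and> \<sigma> P2 = P2 \<and> \<sigma> K3 = x"
proof -
  have "x \<in> VV" using EE_VV assms by blast
  then show ?thesis
  proof (cases rule: VV_cases)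
    case (P v) then show ?thesis using assms EE_PP[of "eb + ed" v] by (simp add: P2_def)
  next
    case (K c)
    have cbd: "c$b + c$d = 0" using assms K EE_PK[of "eb + ed" c] by (simp add: P2_def dotp_simps)
    have cb: "c$b \<noteq> 0" using assms K EE_PK[of eb c] by (simp add: P0_def)
    define c' where "c' = (1 / c$a) *s c"
    define t where "t = c'$b"
    have c'a: "c'$a = 1" using K by (simp add: c'_def)
    have t0: "t \<noteq> 0" using K cb by (simp add: t_def c'_def)
    have c'd: "c'$d = - t"
    proof -
      have "c$d = - c$b" using cbd by (metis add.commute eq_neg_iff_add_eq_0)
      then show ?thesis by (simp add: c'_def t_def)
    qed
    have "Kc c' = Kc c" unfolding c'_def using K(1) by (rule norm_c)
    then have xc': "x = Kc c'" using K(2) by simp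
    define cm where "cm = ea + t *s eb - t *s ed"
    have cm_comps: "cm$a = 1" "cm$b = t" "cm$d = - t" by (simp_all add: cm_def)
    define gB where "gB = el ((t - 1) *s ea) ea"
    have nzB: "1 + dotp ((t - 1) *s ea) ea \<noteq> 0" using t0 by (simp add: dotp_simps)
    have autB: "graph_aut VV EE (\<lambda>X. gB ` X)" unfolding gB_def by (rule aut_el[OF nzB]) simp_all
    have B0: "gB ` P0 = P0" unfolding P0_def gB_def img_el_Pv by (simp add: el_def dotp_simps)
    have B2: "gB ` P2 = P2" unfolding P2_def gB_def img_el_Pv by (simp add: el_def dotp_simps)
    have LB: "linbij gB (el (elinv ((t - 1) *s ea) ea) ea)" unfolding gB_def by (rule linbij_el[OF nzB])
    have B1: "gB ` K1 = K1" unfolding K1_def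
      by (rule img_Kc[OF LB, where l=t]) (auto simp: gB_def el_def dotp_simps t0 algebra_simps)
    have B3: "gB ` K3 = Kc cm" unfolding K3_def
      by (rule img_Kc[OF LB, where l=t]) (auto simp: gB_def el_def dotp_simps t0 algebra_simps cm_def c3_def)
    define \<psi> where "\<psi> = (1 / t) *s (c' - cm)"
    have \<psi>a: "\<psi>$a = 0" and \<psi>b: "\<psi>$b = 0" and \<psi>d: "\<psi>$d = 0"
      using c'a c'd cm_comps by (simp_all add: \<psi>_def t_def)
    define gA where "gA = el \<psi> ed"
    have nzA: "1 + dotp \<psi> ed \<noteq> 0" using \<psi>d by simp
    have autA: "graph_aut VV EE (\<lambda>X. gA ` X)" unfolding gA_def by (rule aut_el[OF nzA]) (simp_all add: \<psi>a)
    have A0: "gA ` P0 = P0" unfolding P0_def gA_def img_el_Pv by (simp add: el_def \<psi>b)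
    have A2: "gA ` P2 = P2" unfolding P2_def gA_def img_el_Pv by (simp add: el_def dotp_simps \<psi>b \<psi>d)
    have A1: "gA ` K1 = K1" unfolding K1_def gA_def
      by (rule img_Kc[where l=1]) (auto simp: el_def dotp_simps intro: linbij_el[OF nzA])
    have A3: "gA ` Kc cm = Kc c'" unfolding gA_def
    proof (rule img_Kc[where l=1])
      show "linbij (el \<psi> ed) (el (elinv \<psi> ed) ed)" by (rule linbij_el[OF nzA])
      fix z
      have "dotp c' (el \<psi> ed z) = dotp c' z - t * dotp \<psi> z" by (simp add: el_def dotp_simps c'd)
      also have "t * dotp \<psi> z = dotp c' z - dotp cm z" using t0 by (simp add: \<psi>_def dotp_simps right_diff_distrib)
      finally show "dotp c' (el \<psi> ed z) = 1 * dotp cm z" by simp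
    qed simp
    have "graph_aut VV EE ((\<lambda>X. gA ` X) \<circ> (\<lambda>X. gB ` X))" by (rule aut_comp[OF autA autB])
    moreover have "((\<lambda>X. gA ` X) \<circ> (\<lambda>X. gB ` X)) P0 = P0" using A0 B0 by simp
    moreover have "((\<lambda>X. gA ` X) \<circ> (\<lambda>X. gB ` X)) K1 = K1" using A1 B1 by simp
    moreover have "((\<lambda>X. gA ` X) \<circ> (\<lambda>X. gB ` X)) P2 = P2" using A2 B2 by simp
    moreover have "((\<lambda>X. gA ` X) \<circ> (\<lambda>X. gB ` X)) K3 = x" using A3 B3 xc' by simp
    ultimately show ?thesis by blast
  qed
qed

lemma L4:
  assumes "EE K3 x" "\<forall>z. \<not> (EE P0 z \<and> EE z x)"
  shows "x = P4"
proof -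
  have "x \<in> VV" using EE_VV assms by blast
  then show ?thesis
  proof (cases rule: VV_cases)
    case (K c) then show ?thesis using assms EE_KK[of c3 c] by (simp add: K3_def)
  next
    case (P v)
    have e3: "v$a + v$b - v$d = 0" using assms P EE_KP[of v c3] by (simp add: K3_def c3_def dotp_simps)
    have vj: "v$j = 0" if j: "j \<noteq> a" "j \<noteq> b" for j
    proof (rule ccontr)
      assume vj: "v$j \<noteq> 0"
      define c where "c = ea - (v$a / v$j) *s axis j 1"
      have ca: "c$a = 1" and cb: "c$b = 0" using j by (simp_all add: c_def axis_def)
      have "EE P0 (Kc c)" using EE_PK[of eb c] ca cb by (simp add: P0_def)
      moreover have "dotp c v = 0"
      proof -
        have "(axis j 1 :: 'a^'n) $ a = 0" using j by (simp add: axis_def)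
        then show ?thesis using vj by (simp add: c_def dotp_simps)
      qed
      moreover have "EE (Kc c) x" using EE_KP[of v c] ca P calculation(2) by simp
      ultimately show False using assms(2) by blast
    qed
    have vd: "v$d = 0" using vj ad bd by (metis)
    have "v = v$b *s (eb - ea)"
    proof -
      have vi: "v$i = (v$b *s (eb - ea))$i" for i
      proof -
        consider "i = a" | "i = b" | "i \<noteq> a" "i \<noteq> b" by blast
        then show ?thesis
        proof cases
          case 1 then show ?thesis using e3 vd by (simp add: eq_neg_iff_add_eq_0)
        next
          case 2 then show ?thesis by simp
        next
          case 3 then show ?thesis using vj by (simp add: ea_def eb_def axis_def)
        qed
      qed
      show ?thesis by (rule vec_eq_iff[THEN iffD2], rule allI, rule vi)
    qed
    then have "Pv v = P4" unfolding P4_def using Pv_scale[OF P(1)] by metis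
    then show ?thesis using P(2) by simp
  qed
qed

end

lemma ext_step:
  fixes S :: "'v list"
  assumes SV: "set S \<subseteq> VV" and kS: "k < length S"
  and IH: "\<And>zs. is_geodesic VV E zs \<Longrightarrow> take (Suc k) zs = take (Suc k) S \<Longrightarrow> Suc k \<le> length zs \<Longrightarrow>
             \<exists>\<sigma>. graph_aut VV E \<sigma> \<and> map \<sigma> (take (length zs) S) = zs"
  and T: "\<And>zs. is_geodesic VV E zs \<Longrightarrow> take k zs = take k S \<Longrightarrow> k < length zs \<Longrightarrow>
             \<exists>\<tau>. graph_aut VV E \<tau> \<and> (\<forall>i<k. \<tau> (S!i) = S!i) \<and> \<tau> (S!k) = zs!k"
  and g: "is_geodesic VV E zs" and tk: "take k zs = take k S" and kz: "k \<le> length zs"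
  shows "\<exists>\<sigma>. graph_aut VV E \<sigma> \<and> map \<sigma> (take (length zs) S) = zs"
proof (cases "length zs = k")
  case True
  then have "map id (take (length zs) S) = zs" using tk by simp
  then show ?thesis by (intro exI[of _ id]) (simp add: graph_aut_iso iso_id)
next
  case False
  then have kz': "k < length zs" using kz by simp
  obtain \<tau> where \<tau>: "graph_aut VV E \<tau>" "\<forall>i<k. \<tau> (S!i) = S!i" "\<tau> (S!k) = zs!k"
    using T[OF g tk kz'] by blast
  have i\<tau>: "giso VV E VV E \<tau>" using \<tau>(1) by (simp add: graph_aut_iso)
  let ?\<psi> = "inv_into VV \<tau>"
  have i\<psi>: "giso VV E VV E ?\<psi>" using iso_inv[OF i\<tau>] .
  have zsV: "set zs \<subseteq> VV" using g by (simp add: is_geodesic_def is_walk_def)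
  define zs' where "zs' = map ?\<psi> zs"
  have g': "is_geodesic VV E zs'" unfolding zs'_def using geodesic_map[OF i\<psi> g] .
  have t': "take (Suc k) zs' = take (Suc k) S"
  proof (rule nth_equalityI)
    show "length (take (Suc k) zs') = length (take (Suc k) S)" using kz' kS by (simp add: zs'_def)
    fix i assume i: "i < length (take (Suc k) zs')"
    then have ik: "i \<le> k" and iz: "i < length zs" using kz' by (auto simp: zs'_def)
    have "take (Suc k) zs' ! i = ?\<psi> (zs ! i)" using i by (simp add: zs'_def)
    also have "\<dots> = S ! i"
    proof (cases "i < k")
      case True
      then have "zs ! i = S ! i" using tk by (metis nth_take)
      moreover have "S ! i \<in> VV" using SV kS True by auto
      ultimately show ?thesis using \<tau>(2) True inv_into_iso_left[OF i\<tau>] by metis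
    next
      case False
      then have "i = k" using ik by simp
      moreover have "S ! k \<in> VV" using SV kS by auto
      ultimately show ?thesis using \<tau>(3) inv_into_iso_left[OF i\<tau>] by metis
    qed
    also have "\<dots> = take (Suc k) S ! i" using ik by simp
    finally show "take (Suc k) zs' ! i = take (Suc k) S ! i" .
  qed
  have lz: "Suc k \<le> length zs'" using kz' by (simp add: zs'_def)
  obtain \<sigma>' where \<sigma>': "graph_aut VV E \<sigma>'" "map \<sigma>' (take (length zs') S) = zs'"
    using IH[OF g' t' lz] by blast
  have "giso VV E VV E (\<tau> \<circ> \<sigma>')" using iso_comp[OF \<sigma>'(1)[unfolded graph_aut_iso] i\<tau>] .
  moreover have "map (\<tau> \<circ> \<sigma>') (take (length zs) S) = zs"
  proof -
    have "map (\<tau> \<circ> \<sigma>') (take (length zs) S) = map \<tau> (map \<sigma>' (take (length zs') S))"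
      by (simp add: zs'_def)
    also have "\<dots> = map \<tau> zs'" using \<sigma>'(2) by simp
    also have "\<dots> = zs" unfolding zs'_def using zsV inv_into_iso_right[OF i\<tau>]
      by (simp add: subset_iff map_idI)
    finally show ?thesis .
  qed
  ultimately show ?thesis by (auto simp: graph_aut_iso)
qed

lemma geod_facts:
  assumes g: "is_geodesic VV E zs" and k: "k < length zs"
  shows "gdist VV E (zs!0) (zs!k) = k"
proof -
  have "is_geodesic VV E (take (Suc k) zs)" using geodesic_take[OF g] k by simp
  moreover have "length (take (Suc k) zs) = Suc k" using k by simp
  moreover have "take (Suc k) zs \<noteq> []" using k by auto
  moreover have "last (take (Suc k) zs) = zs!k"
    using calculation(2,3) by (simp add: last_conv_nth)
  moreover have "hd (take (Suc k) zs) = zs!0" using k by (cases zs) auto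
  ultimately show ?thesis by (simp add: is_geodesic_def)
qed

lemma geod_adj:
  assumes g: "is_geodesic VV E zs" and k: "Suc k < length zs"
  shows "E (zs!k) (zs!Suc k)"
  using assms by (simp add: is_geodesic_def is_walk_def)

lemma geod_in:
  assumes g: "is_geodesic VV E zs" and k: "k < length zs"
  shows "zs!k \<in> VV"
  using assms by (auto simp: is_geodesic_def is_walk_def)

context std begin

lemma walk2: "EE x y \<Longrightarrow> is_walk VV EE [x, y]"
  using EE_VV by (simp add: is_walk_Cons2 is_walk_single)
lemma walk3: "EE x y \<Longrightarrow> EE y z \<Longrightarrow> is_walk VV EE [x, y, z]"
  using EE_VV by (simp add: is_walk_Cons2 is_walk_single)
lemma walk4: "EE x y \<Longrightarrow> EE y z \<Longrightarrow> EE z w \<Longrightarrow> is_walk VV EE [x, y, z, w]"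
  using EE_VV by (simp add: is_walk_Cons2 is_walk_single)
lemma walk5: "EE x y \<Longrightarrow> EE y z \<Longrightarrow> EE z w \<Longrightarrow> EE w r \<Longrightarrow> is_walk VV EE [x, y, z, w, r]"
  using EE_VV by (simp add: is_walk_Cons2 is_walk_single)

lemma diam0:
  assumes "y \<in> VV"
  shows "gdist VV EE P0 y \<le> 4"
  using assms
proof (cases rule: VV_cases)
  case (P v)
  show ?thesis
  proof (cases "\<exists>j. j \<noteq> a \<and> j \<noteq> b \<and> v$j \<noteq> 0")
    case True
    then obtain j where j: "j \<noteq> a" "j \<noteq> b" "v$j \<noteq> 0" by blast
    define c where "c = ea - (v$a / v$j) *s axis j 1"
    have aj: "(axis j 1 :: 'a^'n) $ a = 0" "(axis j 1 :: 'a^'n) $ b = 0" using j by (simp_all add: axis_def)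
    have ca: "c$a = 1" and cb: "c$b = 0" using aj by (simp_all add: c_def)
    have e1: "EE P0 (Kc c)" using EE_PK[of eb c] ca cb by (simp add: P0_def)
    have "dotp c v = 0" using j aj by (simp add: c_def dotp_simps)
    then have e2: "EE (Kc c) y" using EE_KP[of v c] ca P by simp
    have "gdist VV EE P0 y \<le> length [P0, Kc c, y] - 1" by (rule gdist_le[OF walk3[OF e1 e2]]) simp_all
    then show ?thesis by simp
  next
    case False
    then have vd: "v$d = 0" using ad bd by metis
    define s where "s = v$a / v$b"
    define c where "c = ea - s *s eb + s *s ed"
    have ca: "c$a = 1" by (simp add: c_def)
    have e1: "EE P0 K1" using EE_PK[of eb ea] by (simp add: P0_def K1_def)
    have e2: "EE K1 P2" using EE_KP[of "eb + ed" ea] by (simp add: P2_def K1_def dotp_simps)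
    have e3: "EE P2 (Kc c)" using EE_PK[of "eb + ed" c] ca by (simp add: P2_def c_def dotp_simps)
    have "dotp c v = 0" using vd P(1) by (simp add: c_def dotp_simps s_def)
    then have e4: "EE (Kc c) y" using EE_KP[of v c] ca P by simp
    have "gdist VV EE P0 y \<le> length [P0, K1, P2, Kc c, y] - 1"
      by (rule gdist_le[OF walk5[OF e1 e2 e3 e4]]) simp_all
    then show ?thesis by simp
  qed
next
  case (K c)
  show ?thesis
  proof (cases "c$b = 0")
    case True
    have e1: "EE P0 y" using EE_PK[of eb c] K True by (simp add: P0_def)
    have "gdist VV EE P0 y \<le> length [P0, y] - 1" by (rule gdist_le[OF walk2[OF e1]]) simp_all
    then show ?thesis by simp
  next
    case False
    define s where "s = - (c$b + c$d) / c$a"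
    define v where "v = eb + s *s ea + ed"
    have vb: "v$b = 1" and vd: "v$d = 1" and va: "v$a = s" by (simp_all add: v_def)
    have "dotp c v = 0" using K(1) by (simp add: v_def s_def dotp_simps field_simps)
    then have e3: "EE (Pv v) y" using EE_PK[of v c] K vb by simp
    define c' where "c' = ea - s *s ed"
    have c'a: "c'$a = 1" and c'b: "c'$b = 0" by (simp_all add: c'_def)
    have e1: "EE P0 (Kc c')" using EE_PK[of eb c'] c'a c'b by (simp add: P0_def)
    have "dotp c' v = 0" using va vd by (simp add: c'_def dotp_simps)
    then have e2: "EE (Kc c') (Pv v)" using EE_KP[of v c'] c'a vb by simp
    have "gdist VV EE P0 y \<le> length [P0, Kc c', Pv v, y] - 1"
      by (rule gdist_le[OF walk4[OF e1 e2 e3]]) simp_all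
    then show ?thesis by simp
  qed
qed

lemma diam:
  assumes "u \<in> VV" "y \<in> VV"
  shows "gdist VV EE u y \<le> 4"
proof -
  obtain \<sigma> where \<sigma>: "graph_aut VV EE \<sigma>" "\<sigma> P0 = u" using L0[OF assms(1)] by blast
  have i\<sigma>: "giso VV EE VV EE \<sigma>" using \<sigma>(1) by (simp add: graph_aut_iso)
  let ?y = "inv_into VV \<sigma> y"
  have yV: "?y \<in> VV" using iso_in[OF iso_inv[OF i\<sigma>] assms(2)] .
  have "\<sigma> ?y = y" using inv_into_iso_right[OF i\<sigma> assms(2)] .
  then have "gdist VV EE u y = gdist VV EE P0 ?y" using gdist_iso[OF i\<sigma> P0_in yV] \<sigma>(2) by simp
  then show ?thesis using diam0[OF yV] by simp
qed

end

lemma take_eq_nth: "take k xs = take k ys \<Longrightarrow> i < k \<Longrightarrow> xs!i = ys!i"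
  by (metis nth_take)

context std begin

lemma SS_nth[simp]: "SS!0 = P0" "SS!1 = K1" "SS!2 = P2" "SS!3 = K3" "SS!4 = P4" "length SS = 5"

  by (simp_all add: SS_def numeral_eq_Suc)

lemma St5:
  assumes g: "is_geodesic VV EE zs" and t: "take 5 zs = take 5 SS" and l: "5 \<le> length zs"
  shows "\<exists>\<sigma>. graph_aut VV EE \<sigma> \<and> map \<sigma> (take (length zs) SS) = zs"
proof -
  have "length zs = 5"
  proof (rule ccontr)
    assume "length zs \<noteq> 5"
    then have l6: "length zs - 1 < length zs" "5 \<le> length zs - 1" using l by auto
    have "gdist VV EE (zs!0) (zs!(length zs - 1)) = length zs - 1" using geod_facts[OF g l6(1)] .
    moreover have "gdist VV EE (zs!0) (zs!(length zs - 1)) \<le> 4"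
      using diam[OF geod_in[OF g, of 0] geod_in[OF g, of "length zs - 1"]] l6 by (cases zs) auto
    ultimately show False using l6 by simp
  qed
  then have "zs = SS" using t by (metis SS_nth(6) take_all_iff order_refl)
  then show ?thesis by (intro exI[of _ id]) (simp add: graph_aut_iso iso_id)
qed

lemma gd0: "gdist VV EE x x = 0" if "x \<in> VV"
  using gdist_le[of VV EE "[x]" x x] that by (simp add: is_walk_single)

lemma Tk:
  assumes k5: "k < 5" and g: "is_geodesic VV EE zs" and t: "take k zs = take k SS" and kl: "k < length zs"
  shows "\<exists>\<tau>. graph_aut VV EE \<tau> \<and> (\<forall>i<k. \<tau> (SS!i) = SS!i) \<and> \<tau> (SS!k) = zs!k"
proof -
  have zi: "zs!i = SS!i" if "i < k" for i using take_eq_nth[OF t that] .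
  have gk: "gdist VV EE (zs!0) (zs!k) = k" using geod_facts[OF g kl] .
  have adj: "EE (zs!i) (zs!j)" if "j = Suc i" "j \<le> k" for i j
    using geod_adj[OF g, of i] that kl by simp
  consider "k = 0" | "k = 1" | "k = 2" | "k = 3" | "k = 4" using k5 by linarith
  then show ?thesis
  proof cases
    case 1
    then obtain \<tau> where "graph_aut VV EE \<tau>" "\<tau> P0 = zs!0" using L0[OF geod_in[OF g kl]] by auto
    then show ?thesis using 1 by auto
  next
    case 2
    have "EE (zs!0) (zs!1)" using adj[of 1 0] 2 by simp
    moreover have "zs!0 = P0" using zi[of 0] 2 by (simp add: SS_def)
    ultimately have e: "EE P0 (zs!1)" by simp
    obtain \<tau> where \<tau>: "graph_aut VV EE \<tau>" "\<tau> P0 = P0" "\<tau> K1 = zs!1" using L1[OF e] by blast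
    then show ?thesis using 2 by (intro exI[of _ \<tau>]) (simp add: SS_def)
  next
    case 3
    have "EE (zs!1) (zs!2)" using adj[of 2 1] 3 by simp
    moreover have "zs!1 = K1" using zi[of 1] 3 by (simp add: SS_def)
    ultimately have e: "EE K1 (zs!2)" by simp
    have ne: "zs!2 \<noteq> P0"
    proof
      assume "zs!2 = P0"
      then have "gdist VV EE (zs!0) (zs!2) = 0" using zi[of 0] 3 gd0 P0_in by simp
      then show False using gk 3 by simp
    qed
    then obtain \<tau> where \<tau>: "graph_aut VV EE \<tau>" "\<tau> P0 = P0" "\<tau> K1 = K1" "\<tau> P2 = zs!2" using L2[OF e ne] by blast
    have "\<forall>i<k. \<tau> (SS!i) = SS!i"
    proof (intro allI impI)
      fix i assume "i < k" then have "i = 0 \<or> i = 1" using 3 by auto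
      then show "\<tau> (SS!i) = SS!i" using \<tau> by (auto simp: SS_def)
    qed
    then show ?thesis using 3 \<tau> by auto
  next
    case 4
    have "EE (zs!2) (zs!3)" using adj[of 3 2] 4 by simp
    moreover have "zs!2 = P2" using zi[of 2] 4 by (simp add: SS_def)
    ultimately have e: "EE P2 (zs!3)" by simp
    have ne: "\<not> EE P0 (zs!3)"
    proof
      assume "EE P0 (zs!3)"
      then have "gdist VV EE P0 (zs!3) \<le> length [P0, zs!3] - 1" by (intro gdist_le[OF walk2]) simp_all
      then show False using gk 4 zi[of 0] by simp
    qed
    then obtain \<tau> where \<tau>: "graph_aut VV EE \<tau>" "\<tau> P0 = P0" "\<tau> K1 = K1" "\<tau> P2 = P2" "\<tau> K3 = zs!3"
      using L3[OF e ne] by blast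
    have "\<forall>i<k. \<tau> (SS!i) = SS!i"
    proof (intro allI impI)
      fix i assume "i < k" then have "i = 0 \<or> i = 1 \<or> i = 2" using 4 by auto
      then show "\<tau> (SS!i) = SS!i" using \<tau> by (auto simp: SS_def)
    qed
    then show ?thesis using 4 \<tau> by auto
  next
    case 5
    have "EE (zs!3) (zs!4)" using adj[of 4 3] 5 by simp
    moreover have "zs!3 = K3" using zi[of 3] 5 by (simp add: SS_def)
    ultimately have e: "EE K3 (zs!4)" by simp
    have ne: "\<forall>z. \<not> (EE P0 z \<and> EE z (zs!4))"
    proof (intro allI notI)
      fix z assume "EE P0 z \<and> EE z (zs!4)"
      then have "gdist VV EE P0 (zs!4) \<le> length [P0, z, zs!4] - 1" by (intro gdist_le[OF walk3]) simp_all
      then show False using gk 5 zi[of 0] by simp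
    qed
    have "zs!4 = P4" using L4[OF e ne] .
    then show ?thesis using 5 by (intro exI[of _ id]) (simp add: graph_aut_iso iso_id)
  qed
qed

lemma stage:
  "k \<le> 5 \<Longrightarrow> is_geodesic VV EE zs \<Longrightarrow> take k zs = take k SS \<Longrightarrow> k \<le> length zs \<Longrightarrow>
   \<exists>\<sigma>. graph_aut VV EE \<sigma> \<and> map \<sigma> (take (length zs) SS) = zs"
proof (induction "5 - k" arbitrary: k zs)
  case 0
  then have "k = 5" by simp
  then show ?case using St5 0 by blast
next
  case (Suc m)
  then have k5: "k < 5" by simp
  show ?case
  proof (rule ext_step[where k=k and S=SS])
    show "set SS \<subseteq> VV" by (rule SS_in)
    show "k < length SS" using k5 by simp
    fix zs' assume "is_geodesic VV EE zs'" "take (Suc k) zs' = take (Suc k) SS" "Suc k \<le> length zs'"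
    then show "\<exists>\<sigma>. graph_aut VV EE \<sigma> \<and> map \<sigma> (take (length zs') SS) = zs'"
      using Suc.hyps(1)[of "Suc k" zs'] Suc.hyps(2) k5 by simp
  next
    fix zs' assume "is_geodesic VV EE zs'" "take k zs' = take k SS" "k < length zs'"
    then show "\<exists>\<tau>. graph_aut VV EE \<tau> \<and> (\<forall>i<k. \<tau> (SS!i) = SS!i) \<and> \<tau> (SS!k) = zs'!k"
      using Tk k5 by blast
  qed (use Suc.prems in auto)
qed

lemma GT_std: "geodesic_transitive VV EE"
  unfolding geodesic_transitive_def
proof (intro allI impI)
  fix xs ys assume h: "is_geodesic VV EE xs \<and> is_geodesic VV EE ys \<and> length xs = length ys"
  obtain \<sigma>1 where s1: "graph_aut VV EE \<sigma>1" "map \<sigma>1 (take (length xs) SS) = xs"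
    using stage[of 0 xs] h by auto
  obtain \<sigma>2 where s2: "graph_aut VV EE \<sigma>2" "map \<sigma>2 (take (length xs) SS) = ys"
    using stage[of 0 ys] h by auto
  have i1: "giso VV EE VV EE \<sigma>1" using s1(1) by (simp add: graph_aut_iso)
  let ?\<psi> = "inv_into VV \<sigma>1"
  have "giso VV EE VV EE (\<sigma>2 \<circ> ?\<psi>)"
    using iso_comp[OF iso_inv[OF i1] s2(1)[unfolded graph_aut_iso]] .
  moreover have "map (\<sigma>2 \<circ> ?\<psi>) xs = ys"
  proof -
    have "map ?\<psi> xs = take (length xs) SS"
    proof -
      have "map ?\<psi> xs = map ?\<psi> (map \<sigma>1 (take (length xs) SS))" using s1(2) by simp
      also have "\<dots> = map (?\<psi> \<circ> \<sigma>1) (take (length xs) SS)" by simp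
      also have "\<dots> = take (length xs) SS"
        using SS_in inv_into_iso_left[OF i1] by (auto intro!: map_idI dest: in_set_takeD)
      finally show ?thesis .
    qed
    have "map (\<sigma>2 \<circ> ?\<psi>) xs = map \<sigma>2 (map ?\<psi> xs)" by simp
    then show ?thesis using s2(2) \<open>map ?\<psi> xs = take (length xs) SS\<close> by simp
  qed
  ultimately show "\<exists>\<sigma>. graph_aut VV EE \<sigma> \<and> map \<sigma> xs = ys" by (auto simp: graph_aut_iso)
qed

end

lemma three_idx:
  assumes "CARD('n::finite) \<ge> 3"
  shows "\<exists>a b d :: 'n. a \<noteq> b \<and> a \<noteq> d \<and> b \<noteq> d"
proof -
  obtain T :: "'n set" where "T \<subseteq> UNIV" "card T = 3"
    using obtain_subset_with_card_n[OF assms] by blast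
  then obtain x y z where "T = {x, y, z}" "x \<noteq> y" "y \<noteq> z" "x \<noteq> z" unfolding card_3_iff by blast
  then show ?thesis by blast
qed

theorem proposition3p4:
  fixes w H :: "('a::{field,finite} ^ 'n) set"
  assumes "CARD('n) \<ge> 3"
    and "is_point w" and "is_hyperplane H" and "w \<subseteq> H"
  shows "geodesic_transitive (Delta1 H \<union> Delta2 w) (Gamma_adj w H)"
proof -
  obtain a b d :: 'n where abd: "a \<noteq> b" "a \<noteq> d" "b \<noteq> d" using three_idx[OF assms(1)] by blast
  interpret S: std a b d "TYPE('a)" by unfold_locales (use abd in auto)
  obtain h where h: "h \<noteq> 0" "H = Kc h" using assms(3) is_hyperplane_iff by blast
  obtain w0 where w0: "w0 \<noteq> 0" "w = Pv w0" using assms(2) is_point_iff by blast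
  have hw0: "dotp h w0 = 0" using assms(4) h w0 by (simp add: Pv_sub_Kc)
  obtain \<beta> where \<beta>: "\<beta>$b = 1" "dotp \<beta> h \<noteq> 0" using pick_vec[OF h(1), of b] by blast
  define k where "k = dotp h \<beta>"
  have k0: "k \<noteq> 0" using \<beta>(2) by (simp add: k_def dotp_comm)
  define \<alpha> where "\<alpha> = (1 / k) *s (S.eb - h)"
  have nzA: "1 + dotp \<alpha> \<beta> \<noteq> 0"
  proof -
    have "1 + dotp \<alpha> \<beta> = 1 + (1 - k) / k" using \<beta> by (simp add: \<alpha>_def dotp_simps k_def dotp_comm field_simps)
    also have "\<dots> = 1 / k" using k0 by (simp add: field_simps)
    finally show ?thesis using k0 by simp
  qed
  define gA where "gA = el \<alpha> \<beta>"
  define gA' where "gA' = el (elinv \<alpha> \<beta>) \<beta>"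
  have LA: "linbij gA gA'" unfolding gA_def gA'_def by (rule linbij_el[OF nzA])
  have hA: "dotp h (gA z) = dotp S.eb z" for z
  proof -
    have "dotp h (gA z) = dotp h z + dotp \<alpha> z * k" by (simp add: gA_def el_def dotp_simps k_def)
    also have "\<dots> = z$b" using k0 by (simp add: \<alpha>_def dotp_simps field_simps)
    finally show ?thesis by simp
  qed
  have AH: "gA ` S.Hs = H" unfolding S.Hs_def h(2) by (rule img_Kc[OF LA, where l=1]) (simp_all add: hA)
  define w1 where "w1 = gA' w0"
  have gw1: "gA w1 = w0" using LA by (simp add: w1_def linbij.inv2)
  have w1ne: "w1 \<noteq> 0"
  proof
    assume "w1 = 0"
    then have "gA w1 = 0" by (simp add: gA_def el_def)
    then show False using gw1 w0(1) by simp
  qed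
  have w1b: "w1$b = 0" using hA[of w1] gw1 hw0 by simp
  obtain \<beta>2 where \<beta>2: "\<beta>2$a = 1" "dotp \<beta>2 w1 \<noteq> 0" using pick_vec[OF w1ne, of a] by blast
  have nzB: "1 + dotp \<beta>2 (w1 - S.ea) \<noteq> 0" using \<beta>2 by (simp add: dotp_simps)
  define gB where "gB = el \<beta>2 (w1 - S.ea)"
  define gB' where "gB' = el (elinv \<beta>2 (w1 - S.ea)) (w1 - S.ea)"
  have LB: "linbij gB gB'" unfolding gB_def gB'_def by (rule linbij_el[OF nzB])
  have gBea: "gB S.ea = w1" using \<beta>2(1) by (simp add: gB_def el_def)
  have BH: "gB ` S.Hs = S.Hs" unfolding S.Hs_def
    by (rule img_Kc[OF LB, where l=1]) (simp_all add: gB_def el_def dotp_simps w1b)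
  define T where "T = gA \<circ> gB"
  have LT: "linbij T (gB' \<circ> gA')" unfolding T_def by (rule linbij_comp[OF LA LB])
  have TH: "T ` S.Hs = H"
  proof -
    have "T ` S.Hs = gA ` (gB ` S.Hs)" by (simp add: T_def image_image)
    then show ?thesis using AH BH by simp
  qed
  have Tw: "T ` S.ws = w"
  proof -
    have "T ` S.ws = gA ` (gB ` Pv S.ea)" by (simp add: T_def S.ws_def image_image)
    also have "\<dots> = Pv w0"
      using img_Pv[OF linbij.lin[OF LB]] img_Pv[OF linbij.lin[OF LA]] gBea gw1 by simp
    finally show ?thesis using w0(2) by simp
  qed
  have "giso (Delta1 S.Hs \<union> Delta2 S.ws) (Gamma_adj S.ws S.Hs)
     (Delta1 (T ` S.Hs) \<union> Delta2 (T ` S.ws)) (Gamma_adj (T ` S.ws) (T ` S.Hs)) (\<lambda>X. T ` X)"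
    by (rule linbij.iso_img[OF LT])
  then have "giso (Delta1 S.Hs \<union> Delta2 S.ws) (Gamma_adj S.ws S.Hs)
     (Delta1 H \<union> Delta2 w) (Gamma_adj w H) (\<lambda>X. T ` X)" unfolding TH Tw .
  moreover have "geodesic_transitive (Delta1 S.Hs \<union> Delta2 S.ws) (Gamma_adj S.ws S.Hs)"
    using S.GT_std by (simp add: S.VV_def S.EE_def)
  ultimately show ?thesis by (rule GT_transfer)
qed


end
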